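(* Let $D$ be an associative division algebra finite-dimensional over its center $F$, let $\sigma\in\mathrm{Aut}(D)$ be such that $\sigma|_F$ has finite order $m$, let $F_0=\mathrm{Fix}(\sigma)\cap F$, and let $A=(D,\sigma,d)$ with $d\in D\setminus F_0$. (i) The subgroup of $F_0$-automorphisms of $A$ extending $\mathrm{id}_D$ is isomorphic to $\{k\in F^\times\mid k\sigma(k)\cdots\sigma^{m-1}(k)=1\}$. (ii) If $F_0$ contains a primitive $m$th root of unity $\omega$, then $\langle H_{\mathrm{id},\omega}\rangle$ is a cyclic subgroup of $\mathrm{Aut}_{F_0}(A)$ of order $m$.
   Context: $D[t;\sigma]$ is the twisted polynomial ring: polynomials $\sum a_it^i$ ($a_i\in D$), multiplication determined by $ta=\sigma(a)t$. For $d\in D^\times$, $(D,\sigma,d)$ is the set of polynomials of degree $<m$ in $D[t;\sigma]$ with multiplication $g\circ h=$ remainder of $gh$ on right division by $t^m-d$; it is a unital algebra over $F_0$ containing $D$. For $k\in F^\times$, $H_{\mathrm{id},k}(\sum_{i=0}^{m-1}a_it^i)=a_0+\sum_{i=1}^{m-1}a_i\big(\prod_{l=0}^{i-1}\sigma^l(k)\big)t^i$. *)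

theory Defs
  imports "HOL-Algebra.Multiplicative_Group"
begin

text \<open>The division algebra D is the whole type 'a :: division_ring.\<close>

definition center :: "'a::division_ring set" where
  "center = {z. \<forall>x. z * x = x * z}"

definition fin_dim_over_center :: "'a::division_ring itself \<Rightarrow> bool" where
  "fin_dim_over_center _ \<longleftrightarrow>
     (\<exists>B :: 'a set. finite B \<and>
        (\<forall>x. \<exists>c. (\<forall>b\<in>B. c b \<in> center) \<and> x = (\<Sum>b\<in>B. c b * b)))"

definition ring_aut :: "('a::division_ring \<Rightarrow> 'a) \<Rightarrow> bool" where
  "ring_aut \<sigma> \<longleftrightarrow> bij \<sigma> \<and> (\<forall>x y. \<sigma> (x + y) = \<sigma> x + \<sigma> y) \<and>
                 (\<forall>x y. \<sigma> (x * y) = \<sigma> x * \<sigma> y)"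

definition restr_order :: "('a::division_ring \<Rightarrow> 'a) \<Rightarrow> nat \<Rightarrow> bool" where
  "restr_order \<sigma> m \<longleftrightarrow> 0 < m \<and> (\<forall>z\<in>center. (\<sigma> ^^ m) z = z) \<and>
      (\<forall>k. 0 < k \<and> k < m \<longrightarrow> (\<exists>z\<in>center. (\<sigma> ^^ k) z \<noteq> z))"

definition fixed_center :: "('a::division_ring \<Rightarrow> 'a) \<Rightarrow> 'a set" where
  "fixed_center \<sigma> = {z \<in> center. \<sigma> z = z}"

text \<open>Polynomials are coefficient functions nat => 'a with finite support.\<close>

definition tpoly :: "(nat \<Rightarrow> 'a::division_ring) set" where
  "tpoly = {p. finite {n. p n \<noteq> 0}}"

text \<open>Product in D[t;\<sigma>], determined by t a = \<sigma>(a) t.\<close>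
definition tmul :: "('a::division_ring \<Rightarrow> 'a) \<Rightarrow> (nat \<Rightarrow> 'a) \<Rightarrow> (nat \<Rightarrow> 'a) \<Rightarrow> nat \<Rightarrow> 'a" where
  "tmul \<sigma> p q = (\<lambda>n. \<Sum>i\<le>n. p i * (\<sigma> ^^ i) (q (n - i)))"

definition tadd :: "(nat \<Rightarrow> 'a::division_ring) \<Rightarrow> (nat \<Rightarrow> 'a) \<Rightarrow> nat \<Rightarrow> 'a" where
  "tadd p q = (\<lambda>n. p n + q n)"

text \<open>The polynomial t^m - d.\<close>
definition tmod :: "nat \<Rightarrow> 'a::division_ring \<Rightarrow> nat \<Rightarrow> 'a" where
  "tmod m d = (\<lambda>n. (if n = m then 1 else 0) - (if n = 0 then d else 0))"

definition deg_lt :: "nat \<Rightarrow> (nat \<Rightarrow> 'a::division_ring) \<Rightarrow> bool" where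
  "deg_lt m r \<longleftrightarrow> (\<forall>n\<ge>m. r n = 0)"

definition Acar :: "nat \<Rightarrow> (nat \<Rightarrow> 'a::division_ring) set" where
  "Acar m = {g. deg_lt m g}"

definition Amul :: "('a::division_ring \<Rightarrow> 'a) \<Rightarrow> nat \<Rightarrow> 'a \<Rightarrow> (nat \<Rightarrow> 'a) \<Rightarrow> (nat \<Rightarrow> 'a) \<Rightarrow> nat \<Rightarrow> 'a" where
  "Amul \<sigma> m d g h = (THE r. deg_lt m r \<and>
       (\<exists>q \<in> tpoly. tmul \<sigma> g h = tadd (tmul \<sigma> q (tmod m d)) r))"

definition const :: "'a::division_ring \<Rightarrow> nat \<Rightarrow> 'a" where
  "const a = (\<lambda>n. if n = 0 then a else 0)"

definition smul :: "'a::division_ring \<Rightarrow> (nat \<Rightarrow> 'a) \<Rightarrow> nat \<Rightarrow> 'a" where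
  "smul c g = (\<lambda>n. c * g n)"

definition is_Aaut :: "('a::division_ring \<Rightarrow> 'a) \<Rightarrow> nat \<Rightarrow> 'a \<Rightarrow> ((nat \<Rightarrow> 'a) \<Rightarrow> (nat \<Rightarrow> 'a)) \<Rightarrow> bool" where
  "is_Aaut \<sigma> m d H \<longleftrightarrow>
     bij_betw H (Acar m) (Acar m) \<and> H \<in> extensional (Acar m) \<and>
     (\<forall>g\<in>Acar m. \<forall>h\<in>Acar m. H (tadd g h) = tadd (H g) (H h)) \<and>
     (\<forall>c\<in>fixed_center \<sigma>. \<forall>g\<in>Acar m. H (smul c g) = smul c (H g)) \<and>
     (\<forall>g\<in>Acar m. \<forall>h\<in>Acar m. H (Amul \<sigma> m d g h) = Amul \<sigma> m d (H g) (H h))"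

definition AutA :: "('a::division_ring \<Rightarrow> 'a) \<Rightarrow> nat \<Rightarrow> 'a \<Rightarrow> ((nat \<Rightarrow> 'a) \<Rightarrow> (nat \<Rightarrow> 'a)) monoid" where
  "AutA \<sigma> m d = \<lparr>carrier = {H. is_Aaut \<sigma> m d H},
                   mult = (\<lambda>H G. compose (Acar m) H G),
                   one = restrict id (Acar m)\<rparr>"

definition AutA_id :: "('a::division_ring \<Rightarrow> 'a) \<Rightarrow> nat \<Rightarrow> 'a \<Rightarrow> ((nat \<Rightarrow> 'a) \<Rightarrow> (nat \<Rightarrow> 'a)) monoid" where
  "AutA_id \<sigma> m d = \<lparr>carrier = {H. is_Aaut \<sigma> m d H \<and> (\<forall>a. H (const a) = const a)},
                   mult = (\<lambda>H G. compose (Acar m) H G),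
                   one = restrict id (Acar m)\<rparr>"

definition normone_group :: "('a::division_ring \<Rightarrow> 'a) \<Rightarrow> nat \<Rightarrow> 'a monoid" where
  "normone_group \<sigma> m = \<lparr>carrier = {k \<in> center. k \<noteq> 0 \<and> prod_list (map (\<lambda>l. (\<sigma> ^^ l) k) [0..<m]) = 1},
                         mult = (*), one = 1\<rparr>"

definition Hid :: "('a::division_ring \<Rightarrow> 'a) \<Rightarrow> nat \<Rightarrow> 'a \<Rightarrow> (nat \<Rightarrow> 'a) \<Rightarrow> nat \<Rightarrow> 'a" where
  "Hid \<sigma> m k = restrict (\<lambda>g. \<lambda>i. if i = 0 then g 0 else g i * prod_list (map (\<lambda>l. (\<sigma> ^^ l) k) [0..<i])) (Acar m)"

end

theory Submission
  imports Defs
begin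



lemma ring_aut_basic:
  assumes "ring_aut f"
  shows "f 0 = 0" "f 1 = 1" "\<And>x y. f (x - y) = f x - f y" "\<And>x. f (-x) = - f x"
    "\<And>x y. f (x + y) = f x + f y" "\<And>x y. f (x * y) = f x * f y" "inj f" "surj f"
proof -
  have add: "\<And>x y. f (x + y) = f x + f y" and mul: "\<And>x y. f (x * y) = f x * f y"
    and b: "bij f" using assms unfolding ring_aut_def by auto
  show "\<And>x y. f (x + y) = f x + f y" "\<And>x y. f (x * y) = f x * f y" by (fact add mul)+
  show "inj f" "surj f" using b bij_is_inj bij_is_surj by auto
  show z: "f 0 = 0" using add[of 0 0] by simp
  have mi: "\<And>x. f (-x) = - f x"
  proof -
    fix x have "f (-x) + f x = 0" using add[of "-x" x] z by simp
    then show "f (-x) = - f x" by (simp add: eq_neg_iff_add_eq_0)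
  qed
  then show "\<And>x. f (-x) = - f x" .
  show "\<And>x y. f (x - y) = f x - f y" by (simp only: diff_conv_add_uminus add mi)
  obtain u where "1 = f u" using surjD[OF bij_is_surj[OF b]] by blast
  then show "f 1 = 1" using mul[of 1 u] by simp
qed

lemma ring_aut_funpow: "ring_aut f \<Longrightarrow> ring_aut (f ^^ n)"
proof (induction n)
  case 0 then show ?case using bij_id by (simp add: ring_aut_def id_def)
next
  case (Suc n)
  then have "ring_aut (f ^^ n)" by simp
  then have h: "bij (f ^^ n)" "\<And>x y. (f^^n) (x + y) = (f^^n) x + (f^^n) y"
    "\<And>x y. (f^^n) (x * y) = (f^^n) x * (f^^n) y" unfolding ring_aut_def by auto
  have g: "bij f" "\<And>x y. f (x + y) = f x + f y"
    "\<And>x y. f (x * y) = f x * f y" using Suc.prems unfolding ring_aut_def by auto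
  have "bij (f \<circ> f ^^ n)" using h(1) g(1) by (rule bij_comp)
  then show ?case unfolding ring_aut_def funpow.simps using h g by simp
qed

lemma ring_aut_center: "ring_aut f \<Longrightarrow> z \<in> center \<Longrightarrow> f z \<in> center"
  unfolding center_def
proof (safe)
  fix x assume a: "ring_aut f" "\<forall>x. z * x = x * z"
  obtain y where "x = f y" using ring_aut_basic(8)[OF a(1)] by (metis surjD)
  have "f z * f y = f (z * y)" using ring_aut_basic(6)[OF a(1)] by simp
  also have "z * y = y * z" using a(2) by blast
  also have "f (y * z) = f y * f z" using ring_aut_basic(6)[OF a(1)] by simp
  finally show "f z * x = x * f z" using \<open>x = f y\<close> by simp
qed

lemma center_mult: "a \<in> center \<Longrightarrow> b \<in> center \<Longrightarrow> a * b \<in> center"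
  unfolding center_def
proof safe
  fix x assume h: "\<forall>x. a * x = x * a" "\<forall>x. b * x = x * b"
  have "a * b * x = a * (b * x)" by (simp add: mult.assoc)
  also have "b * x = x * b" using h by blast
  also have "a * (x * b) = (a * x) * b" by (simp add: mult.assoc)
  also have "a * x = x * a" using h by blast
  finally show "a * b * x = x * (a * b)" by (simp add: mult.assoc)
qed

lemma center_comm: "a \<in> center \<Longrightarrow> a * x = x * a"
  unfolding center_def by auto

lemma center_one: "1 \<in> center" unfolding center_def by simp

lemma center_inverse: "a \<in> center \<Longrightarrow> inverse a \<in> center"
  unfolding center_def
proof safe
  fix x assume h: "\<forall>x. a * x = x * a"
  show "inverse a * x = x * inverse a"
  proof (cases "a = 0")
    case False
    have "inverse a * x = inverse a * (x * a) * inverse a" using False by (simp add: mult.assoc)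
    also have "\<dots> = inverse a * (a * x) * inverse a" by (simp only: h[rule_format, of x, symmetric])
    also have "\<dots> = x * inverse a" using False by (simp add: mult.assoc[symmetric])
    finally show ?thesis .
  qed simp
qed


definition nrm :: "('a::division_ring \<Rightarrow> 'a) \<Rightarrow> 'a \<Rightarrow> nat \<Rightarrow> 'a" where
  "nrm \<sigma> k i = prod_list (map (\<lambda>l. (\<sigma>^^l) k) [0..<i])"

definition mon :: "nat \<Rightarrow> 'a::division_ring \<Rightarrow> nat \<Rightarrow> 'a" where
  "mon i a = (\<lambda>n. if n = i then a else 0)"

lemma nrm_0[simp]: "nrm \<sigma> k 0 = 1" by (simp add: nrm_def)
lemma nrm_Suc: "nrm \<sigma> k (Suc i) = nrm \<sigma> k i * (\<sigma>^^i) k" by (simp add: nrm_def)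

lemma nrm_add: assumes "ring_aut \<sigma>" shows "nrm \<sigma> k (i + j) = nrm \<sigma> k i * (\<sigma>^^i) (nrm \<sigma> k j)"
proof (induction j)
  case 0 then show ?case using ring_aut_basic(2)[OF ring_aut_funpow[OF assms]] by simp
next
  case (Suc j)
  have "nrm \<sigma> k (i + Suc j) = nrm \<sigma> k (i + j) * (\<sigma>^^(i+j)) k" by (simp add: nrm_Suc)
  also have "\<dots> = nrm \<sigma> k i * (\<sigma>^^i) (nrm \<sigma> k j) * (\<sigma>^^i) ((\<sigma>^^j) k)"
    using Suc by (simp add: funpow_add)
  also have "\<dots> = nrm \<sigma> k i * (\<sigma>^^i) (nrm \<sigma> k (Suc j))"
    using ring_aut_basic(6)[OF ring_aut_funpow[OF assms]] by (simp add: nrm_Suc mult.assoc)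
  finally show ?case .
qed

lemma funpow_center: "ring_aut \<sigma> \<Longrightarrow> z \<in> center \<Longrightarrow> (\<sigma>^^i) z \<in> center"
  using ring_aut_center ring_aut_funpow by blast

lemma nrm_center: assumes "ring_aut \<sigma>" "k \<in> center" shows "nrm \<sigma> k i \<in> center"
proof (induction i)
  case 0 then show ?case using center_one by simp
next
  case (Suc i) then show ?case unfolding nrm_Suc by (rule center_mult[OF _ funpow_center[OF assms]])
qed

lemma nrm_mult: assumes "ring_aut \<sigma>" "k \<in> center" "k' \<in> center"
  shows "nrm \<sigma> (k * k') i = nrm \<sigma> k i * nrm \<sigma> k' i"
proof (induction i)
  case 0 then show ?case by simp
next
  case (Suc i)
  have c1: "(\<sigma>^^i) k \<in> center" and c2: "nrm \<sigma> k' i \<in> center"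
    using funpow_center[OF assms(1,2)] nrm_center[OF assms(1,3)] by auto
  have "nrm \<sigma> (k * k') (Suc i) = nrm \<sigma> k i * nrm \<sigma> k' i * ((\<sigma>^^i) k * (\<sigma>^^i) k')"
    using Suc ring_aut_basic(6)[OF ring_aut_funpow[OF assms(1)]] by (simp add: nrm_Suc)
  also have "\<dots> = nrm \<sigma> k i * (nrm \<sigma> k' i * (\<sigma>^^i) k) * (\<sigma>^^i) k'" by (simp add: mult.assoc)
  also have "nrm \<sigma> k' i * (\<sigma>^^i) k = (\<sigma>^^i) k * nrm \<sigma> k' i" using center_comm[OF c2] .
  finally show ?case by (simp add: nrm_Suc mult.assoc)
qed

lemma nrm_nonzero: assumes "ring_aut \<sigma>" "k \<noteq> 0" shows "nrm \<sigma> k i \<noteq> 0"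
proof (induction i)
  case (Suc i)
  have "(\<sigma>^^i) k \<noteq> 0" using assms ring_aut_basic(1,7)[OF ring_aut_funpow[OF assms(1)], of i]
    by (metis injD)
  then show ?case using Suc by (simp add: nrm_Suc)
qed simp

lemma nrm_fixed: assumes "\<sigma> k = k" shows "nrm \<sigma> k i = k ^ i"
proof -
  have "(\<sigma>^^l) k = k" for l by (induction l) (simp_all add: assms)
  then show ?thesis by (induction i) (simp_all add: nrm_Suc power_commutes)
qed

lemma Hid_eq: "g \<in> Acar m \<Longrightarrow> Hid \<sigma> m k g = (\<lambda>n. g n * nrm \<sigma> k n)"
  unfolding Hid_def nrm_def[symmetric] by (auto simp: fun_eq_iff)

lemma mon_in_Acar: "i < m \<Longrightarrow> mon i a \<in> Acar m"
  by (simp add: mon_def Acar_def deg_lt_def)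

lemma const_mon: "const a = mon 0 a" by (simp add: const_def mon_def)

lemma tmul_mon_left: "tmul \<sigma> (mon i a) h n = (if i \<le> n then a * (\<sigma>^^i) (h (n - i)) else 0)"
proof -
  have "tmul \<sigma> (mon i a) h n = (\<Sum>j\<le>n. if j = i then a * (\<sigma>^^j) (h (n - j)) else 0)"
    unfolding tmul_def mon_def by (rule sum.cong) auto
  then show ?thesis by (simp add: sum.delta')
qed

lemma tmul_const_right: assumes "ring_aut \<sigma>" shows "tmul \<sigma> g (mon 0 a) n = g n * (\<sigma>^^n) a"
proof -
  have "tmul \<sigma> g (mon 0 a) n = (\<Sum>j\<le>n. if j = n then g j * (\<sigma>^^j) a else 0)"
    unfolding tmul_def mon_def
    using ring_aut_basic(1)[OF ring_aut_funpow[OF assms]] by (intro sum.cong) auto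
  then show ?thesis by (simp add: sum.delta')
qed

lemma tmul_tmod: assumes "ring_aut \<sigma>"
  shows "tmul \<sigma> q (tmod m d) n = (if m \<le> n then q (n - m) else 0) - q n * (\<sigma>^^n) d"
proof -
  have f: "(\<sigma>^^i) 0 = 0" "(\<sigma>^^i) 1 = 1" "\<And>x y. (\<sigma>^^i) (x - y) = (\<sigma>^^i) x - (\<sigma>^^i) y" for i
    using ring_aut_basic[OF ring_aut_funpow[OF assms]] by auto
  have "tmul \<sigma> q (tmod m d) n = (\<Sum>i\<le>n. (if i = n - m \<and> m \<le> n then q i else 0) - (if i = n then q i * (\<sigma>^^i) d else 0))"
    unfolding tmul_def tmod_def
  proof (intro sum.cong refl)
    fix i assume "i \<in> {..n}"
    then show "q i * (\<sigma> ^^ i) ((if n - i = m then 1 else 0) - (if n - i = 0 then d else 0)) =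
      (if i = n - m \<and> m \<le> n then q i else 0) - (if i = n then q i * (\<sigma> ^^ i) d else 0)"
      using f by (auto simp: right_diff_distrib)
  qed
  also have "\<dots> = (\<Sum>i\<le>n. (if i = n - m \<and> m \<le> n then q i else 0)) - (\<Sum>i\<le>n. (if i = n then q i * (\<sigma>^^i) d else 0))"
    by (rule sum_subtractf)
  also have "(\<Sum>i\<le>n. (if i = n - m \<and> m \<le> n then q i else 0)) = (if m \<le> n then q (n - m) else 0)"
    by (cases "m \<le> n") (simp_all add: sum.delta')
  finally show ?thesis by (simp add: sum.delta')
qed

lemma Acar_high: "g \<in> Acar m \<Longrightarrow> m \<le> n \<Longrightarrow> g n = 0"
  by (simp add: Acar_def deg_lt_def)

lemma tmul_high: assumes "ring_aut \<sigma>" "g \<in> Acar m" "h \<in> Acar m" "m + m \<le> n"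
  shows "tmul \<sigma> g h n = 0"
  unfolding tmul_def
proof (intro sum.neutral ballI)
  fix i assume "i \<in> {..n}"
  show "g i * (\<sigma> ^^ i) (h (n - i)) = 0"
  proof (cases "i < m")
    case True
    then have "h (n - i) = 0" using assms(3,4) by (intro Acar_high) auto
    then show ?thesis using ring_aut_basic(1)[OF ring_aut_funpow[OF assms(1)]] by simp
  next
    case False
    then have "g i = 0" using assms(2) by (intro Acar_high) auto
    then show ?thesis by simp
  qed
qed


lemma funpow_nonzero: "ring_aut \<sigma> \<Longrightarrow> d \<noteq> 0 \<Longrightarrow> (\<sigma>^^n) d \<noteq> 0"
  using ring_aut_basic(1,7)[OF ring_aut_funpow, of \<sigma> n] by (metis injD)

lemma Amul_eq:
  assumes \<sigma>: "ring_aut \<sigma>" and m: "0 < m" and d: "d \<noteq> 0" and g: "g \<in> Acar m" and h: "h \<in> Acar m"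
  shows "Amul \<sigma> m d g h = (\<lambda>n. if n < m then tmul \<sigma> g h n + tmul \<sigma> g h (n + m) * (\<sigma>^^n) d else 0)"
proof -
  define c where "c = tmul \<sigma> g h"
  have ch: "\<And>n. m + m \<le> n \<Longrightarrow> c n = 0" using tmul_high[OF \<sigma> g h] c_def by simp
  define r where "r = (\<lambda>n. if n < m then c n + c (n + m) * (\<sigma>^^n) d else 0)"
  have dr: "deg_lt m r" by (simp add: deg_lt_def r_def)
  define q where "q = (\<lambda>j. c (j + m))"
  have "finite {n. q n \<noteq> 0}"
  proof (rule finite_subset[of _ "{..<m}"])
    show "{n. q n \<noteq> 0} \<subseteq> {..<m}"
    proof
      fix n assume "n \<in> {n. q n \<noteq> 0}"
      then have "c (n + m) \<noteq> 0" by (simp add: q_def)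
      then show "n \<in> {..<m}" using ch[of "n + m"] by (cases "n < m") auto
    qed
  qed simp
  then have qt: "q \<in> tpoly" unfolding tpoly_def by simp
  have eq: "c = tadd (tmul \<sigma> q (tmod m d)) r"
  proof (rule ext)
    fix n
    show "c n = tadd (tmul \<sigma> q (tmod m d)) r n"
    proof (cases "n < m")
      case True then show ?thesis by (simp add: tadd_def tmul_tmod[OF \<sigma>] r_def q_def)
    next
      case False
      then have "c (n + m) = 0" using ch by simp
      then show ?thesis using False by (simp add: tadd_def tmul_tmod[OF \<sigma>] r_def q_def)
    qed
  qed
  have "Amul \<sigma> m d g h = r"
    unfolding Amul_def c_def[symmetric]
  proof (rule the_equality)
    show "deg_lt m r \<and> (\<exists>q\<in>tpoly. c = tadd (tmul \<sigma> q (tmod m d)) r)" using dr qt eq by blast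
  next
    fix r' assume "deg_lt m r' \<and> (\<exists>q\<in>tpoly. c = tadd (tmul \<sigma> q (tmod m d)) r')"
    then obtain q' where dr': "deg_lt m r'" and q't: "q' \<in> tpoly"
      and e: "c = tadd (tmul \<sigma> q' (tmod m d)) r'" by blast
    have E: "\<And>n. c n = (if m \<le> n then q' (n - m) else 0) - q' n * (\<sigma>^^n) d + r' n"
      using e by (simp add: fun_eq_iff tadd_def tmul_tmod[OF \<sigma>])
    have r'h: "\<And>n. m \<le> n \<Longrightarrow> r' n = 0" using dr' by (simp add: deg_lt_def)
    have step: "q' (j + m) \<noteq> 0" if "m \<le> j" "q' j \<noteq> 0" for j
    proof
      assume z: "q' (j + m) = 0"
      have "c (j + m) = q' j" using E[of "j + m"] z r'h[of "j + m"] by simp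
      moreover have "c (j + m) = 0" using ch that by simp
      ultimately show False using that by simp
    qed
    have hi: "q' j = 0" if "m \<le> j" for j
    proof (rule ccontr)
      assume nz: "q' j \<noteq> 0"
      have all: "q' (j + i * m) \<noteq> 0" for i
      proof (induction i)
        case 0 then show ?case using nz by simp
      next
        case (Suc i)
        have "q' (j + i * m + m) \<noteq> 0" using step[OF _ Suc] that by simp
        moreover have "j + i * m + m = j + Suc i * m" by simp
        ultimately show ?case by metis
      qed
      have "range (\<lambda>i. j + i * m) \<subseteq> {n. q' n \<noteq> 0}" using all by auto
      moreover have "finite {n. q' n \<noteq> 0}" using q't by (simp add: tpoly_def)
      ultimately have "finite (range (\<lambda>i. j + i * m))" by (rule finite_subset)
      moreover have "inj (\<lambda>i. j + i * m)" using m by (auto simp: inj_def)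
      ultimately have "finite (UNIV :: nat set)" using finite_imageD by blast
      then show False by simp
    qed
    show "r' = r"
    proof (rule ext)
      fix n show "r' n = r n"
      proof (cases "n < m")
        case True
        have "c (n + m) = q' n" using E[of "n + m"] hi[of "n + m"] r'h[of "n + m"] by simp
        moreover have "c n = - q' n * (\<sigma>^^n) d + r' n" using E[of n] True by simp
        ultimately show ?thesis using True by (simp add: r_def)
      next
        case False then show ?thesis using r'h by (simp add: r_def)
      qed
    qed
  qed
  then show ?thesis unfolding r_def c_def .
qed

lemma Amul_in_Acar: assumes "ring_aut \<sigma>" "0 < m" "d \<noteq> 0" "g \<in> Acar m" "h \<in> Acar m"
  shows "Amul \<sigma> m d g h \<in> Acar m"
  using Amul_eq[OF assms] by (simp add: Acar_def deg_lt_def)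


lemma funpow_zero: "ring_aut \<sigma> \<Longrightarrow> (\<sigma>^^i) 0 = 0"
  using ring_aut_basic(1)[OF ring_aut_funpow] by blast
lemma funpow_one: "ring_aut \<sigma> \<Longrightarrow> (\<sigma>^^i) 1 = 1"
  using ring_aut_basic(2)[OF ring_aut_funpow] by blast
lemma funpow_mult: "ring_aut \<sigma> \<Longrightarrow> (\<sigma>^^i) (x * y) = (\<sigma>^^i) x * (\<sigma>^^i) y"
  using ring_aut_basic(6)[OF ring_aut_funpow] by blast
lemma funpow_plus: "ring_aut \<sigma> \<Longrightarrow> (\<sigma>^^i) (x + y) = (\<sigma>^^i) x + (\<sigma>^^i) y"
  using ring_aut_basic(5)[OF ring_aut_funpow] by blast

lemma tmul_mon_mon: assumes "ring_aut \<sigma>"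
  shows "tmul \<sigma> (mon i a) (mon j b) n = (if n = i + j then a * (\<sigma>^^i) b else 0)"
  unfolding tmul_mon_left by (auto simp: mon_def funpow_zero[OF assms])

lemma Amul_mon: assumes "ring_aut \<sigma>" "0 < m" "d \<noteq> 0" "i < m" "j < m"
  shows "Amul \<sigma> m d (mon i a) (mon j b) = (if i + j < m then mon (i + j) (a * (\<sigma>^^i) b)
     else mon (i + j - m) (a * (\<sigma>^^i) b * (\<sigma>^^(i + j - m)) d))"
proof -
  have "Amul \<sigma> m d (mon i a) (mon j b) = (\<lambda>n. if n < m then tmul \<sigma> (mon i a) (mon j b) n
     + tmul \<sigma> (mon i a) (mon j b) (n + m) * (\<sigma>^^n) d else 0)"
    using assms by (intro Amul_eq mon_in_Acar) auto
  also have "\<dots> = (\<lambda>n. if n < m then (if n = i + j then a * (\<sigma>^^i) b else 0)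
     + (if n + m = i + j then a * (\<sigma>^^i) b else 0) * (\<sigma>^^n) d else 0)"
    unfolding tmul_mon_mon[OF assms(1)] ..
  also have "\<dots> = (if i + j < m then mon (i + j) (a * (\<sigma>^^i) b)
     else mon (i + j - m) (a * (\<sigma>^^i) b * (\<sigma>^^(i + j - m)) d))"
    using assms(4,5) by (auto simp: fun_eq_iff mon_def)
  finally show ?thesis .
qed

lemma Amul_const_left: assumes "ring_aut \<sigma>" "0 < m" "d \<noteq> 0" "g \<in> Acar m"
  shows "Amul \<sigma> m d (mon 0 a) g = (\<lambda>n. a * g n)"
proof -
  have "tmul \<sigma> (mon 0 a) g n = a * g n" for n by (simp add: tmul_mon_left)
  then show ?thesis using assms Acar_high[OF assms(4)]
    by (subst Amul_eq) (auto simp: mon_in_Acar fun_eq_iff)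
qed

lemma Amul_const_right: assumes "ring_aut \<sigma>" "0 < m" "d \<noteq> 0" "g \<in> Acar m"
  shows "Amul \<sigma> m d g (mon 0 a) = (\<lambda>n. g n * (\<sigma>^^n) a)"
  using assms Acar_high[OF assms(4)]
  by (subst Amul_eq) (auto simp: mon_in_Acar fun_eq_iff tmul_const_right)

lemma Hid_in_Acar: "g \<in> Acar m \<Longrightarrow> Hid \<sigma> m k g \<in> Acar m"
  using Acar_high[of g m] by (simp add: Hid_eq Acar_def deg_lt_def)

lemma nrm_one: assumes "ring_aut \<sigma>" shows "nrm \<sigma> 1 n = 1"
  using nrm_fixed[of \<sigma> 1 n] ring_aut_basic(2)[OF assms] by simp

lemma Hid_comp: assumes "ring_aut \<sigma>" "k \<in> center" "k' \<in> center" "g \<in> Acar m"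
  shows "Hid \<sigma> m k (Hid \<sigma> m k' g) = Hid \<sigma> m (k * k') g"
proof -
  have "g n * nrm \<sigma> k' n * nrm \<sigma> k n = g n * (nrm \<sigma> k n * nrm \<sigma> k' n)" for n
    using center_comm[OF nrm_center[OF assms(1,2)]] by (simp add: mult.assoc)
  then show ?thesis using assms Hid_in_Acar[OF assms(4)]
    by (simp add: Hid_eq nrm_mult fun_eq_iff)
qed

lemma Hid_one: "ring_aut \<sigma> \<Longrightarrow> g \<in> Acar m \<Longrightarrow> Hid \<sigma> m 1 g = g"
  by (simp add: Hid_eq nrm_one)

lemma tmul_Hid: assumes "ring_aut \<sigma>" "k \<in> center" "g \<in> Acar m" "h \<in> Acar m"
  shows "tmul \<sigma> (Hid \<sigma> m k g) (Hid \<sigma> m k h) n = tmul \<sigma> g h n * nrm \<sigma> k n"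
proof -
  have "tmul \<sigma> (Hid \<sigma> m k g) (Hid \<sigma> m k h) n = (\<Sum>i\<le>n. g i * (\<sigma>^^i) (h (n - i)) * nrm \<sigma> k n)"
    unfolding tmul_def Hid_eq[OF assms(3)] Hid_eq[OF assms(4)]
  proof (intro sum.cong refl)
    fix i assume i: "i \<in> {..n}"
    have c: "nrm \<sigma> k i * x = x * nrm \<sigma> k i" for x using center_comm[OF nrm_center[OF assms(1,2)]] .
    have "g i * nrm \<sigma> k i * (\<sigma> ^^ i) (h (n - i) * nrm \<sigma> k (n - i))
        = g i * (nrm \<sigma> k i * (\<sigma> ^^ i) (h (n - i))) * (\<sigma> ^^ i) (nrm \<sigma> k (n - i))"
      by (simp add: funpow_mult[OF assms(1)] mult.assoc)
    also have "\<dots> = g i * (\<sigma> ^^ i) (h (n - i)) * (nrm \<sigma> k i * (\<sigma> ^^ i) (nrm \<sigma> k (n - i)))"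
      by (simp add: c mult.assoc)
    also have "nrm \<sigma> k i * (\<sigma> ^^ i) (nrm \<sigma> k (n - i)) = nrm \<sigma> k n"
      using nrm_add[OF assms(1), of k i "n - i"] i by simp
    finally show "g i * nrm \<sigma> k i * (\<sigma> ^^ i) (h (n - i) * nrm \<sigma> k (n - i)) =
        g i * (\<sigma> ^^ i) (h (n - i)) * nrm \<sigma> k n" .
  qed
  then show ?thesis by (simp add: tmul_def sum_distrib_right)
qed

lemma Hid_Amul: assumes "ring_aut \<sigma>" "0 < m" "d \<noteq> 0" "k \<in> center" "nrm \<sigma> k m = 1"
  "g \<in> Acar m" "h \<in> Acar m"
  shows "Hid \<sigma> m k (Amul \<sigma> m d g h) = Amul \<sigma> m d (Hid \<sigma> m k g) (Hid \<sigma> m k h)"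
proof -
  have nm: "nrm \<sigma> k (n + m) = nrm \<sigma> k n" for n
    using nrm_add[OF assms(1), of k n m] assms(5) funpow_one[OF assms(1)] by simp
  have c: "x * nrm \<sigma> k n = nrm \<sigma> k n * x" for x n using center_comm[OF nrm_center[OF assms(1,4)]] by simp
  show ?thesis
    unfolding Hid_eq[OF Amul_in_Acar[OF assms(1-3,6,7)]]
      Amul_eq[OF assms(1-3) Hid_in_Acar[OF assms(6)] Hid_in_Acar[OF assms(7)]]
      tmul_Hid[OF assms(1,4,6,7)]
    unfolding Amul_eq[OF assms(1-3,6,7)] nm
    by (auto simp: fun_eq_iff distrib_right distrib_left mult.assoc c)
qed


lemma tadd_in_Acar: fixes g h :: "nat \<Rightarrow> 'a::division_ring" shows "g \<in> Acar m \<Longrightarrow> h \<in> Acar m \<Longrightarrow> tadd g h \<in> Acar m"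
  by (simp add: Acar_def deg_lt_def tadd_def)
lemma smul_in_Acar: "g \<in> Acar m \<Longrightarrow> smul c g \<in> Acar m"
  by (simp add: Acar_def deg_lt_def smul_def)

lemma Hid_aut: assumes \<sigma>: "ring_aut \<sigma>" and m: "0 < m" and d: "d \<noteq> 0" and k: "k \<in> center" "k \<noteq> 0"
  and n: "nrm \<sigma> k m = 1"
  shows "is_Aaut \<sigma> m d (Hid \<sigma> m k)" "\<And>a. Hid \<sigma> m k (const a) = const a"
proof -
  have ki: "inverse k \<in> center" using center_inverse[OF k(1)] .
  have inv1: "Hid \<sigma> m (inverse k) (Hid \<sigma> m k g) = g" if "g \<in> Acar m" for g
    using Hid_comp[OF \<sigma> ki k(1) that] Hid_one[OF \<sigma> that] k(2) by simp
  have inv2: "Hid \<sigma> m k (Hid \<sigma> m (inverse k) g) = g" if "g \<in> Acar m" for g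
    using Hid_comp[OF \<sigma> k(1) ki that] Hid_one[OF \<sigma> that] k(2) by simp
  have b: "bij_betw (Hid \<sigma> m k) (Acar m) (Acar m)"
    by (rule bij_betwI[where g = "Hid \<sigma> m (inverse k)"]) (auto simp: Hid_in_Acar inv1 inv2)
  show "is_Aaut \<sigma> m d (Hid \<sigma> m k)"
    unfolding is_Aaut_def
  proof (intro conjI ballI b)
    show "Hid \<sigma> m k \<in> extensional (Acar m)" unfolding Hid_def by simp
  next
    fix g h :: "nat \<Rightarrow> 'a" assume gh: "g \<in> Acar m" "h \<in> Acar m"
    show "Hid \<sigma> m k (tadd g h) = tadd (Hid \<sigma> m k g) (Hid \<sigma> m k h)"
      unfolding Hid_eq[OF tadd_in_Acar[OF gh]] Hid_eq[OF gh(1)] Hid_eq[OF gh(2)]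
      by (simp add: tadd_def fun_eq_iff distrib_right)
  next
    fix c :: 'a and g :: "nat \<Rightarrow> 'a" assume g: "g \<in> Acar m"
    show "Hid \<sigma> m k (smul c g) = smul c (Hid \<sigma> m k g)"
      unfolding Hid_eq[OF smul_in_Acar[OF g]] Hid_eq[OF g]
      by (simp add: smul_def fun_eq_iff mult.assoc)
  next
    fix g h :: "nat \<Rightarrow> 'a" assume "g \<in> Acar m" "h \<in> Acar m"
    then show "Hid \<sigma> m k (Amul \<sigma> m d g h) = Amul \<sigma> m d (Hid \<sigma> m k g) (Hid \<sigma> m k h)"
      by (rule Hid_Amul[OF \<sigma> m d k(1) n])
  qed
  fix a
  show "Hid \<sigma> m k (const a) = const a"
    using mon_in_Acar[OF m, of a] by (simp add: const_mon Hid_eq fun_eq_iff mon_def)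
qed




lemma AutA_group: assumes \<sigma>: "ring_aut \<sigma>" and m: "0 < m" and d: "d \<noteq> 0"
  shows "group (AutA \<sigma> m d)"
proof -
  let ?A = "Acar m :: (nat \<Rightarrow> 'a) set"
  note cl = tadd_in_Acar smul_in_Acar Amul_in_Acar[OF \<sigma> m d]
  have aut_in: "H g \<in> ?A" if "is_Aaut \<sigma> m d H" "g \<in> ?A" for H g
    using that unfolding is_Aaut_def bij_betw_def by auto
  have comp: "is_Aaut \<sigma> m d (compose ?A H G)" if H: "is_Aaut \<sigma> m d H" and G: "is_Aaut \<sigma> m d G" for H G
  proof -
    have "bij_betw (H \<circ> G) ?A ?A" using H G unfolding is_Aaut_def using bij_betw_trans by blast
    then have b: "bij_betw (compose ?A H G) ?A ?A" by (rule bij_betw_cong[THEN iffD1, rotated]) (simp add: compose_eq)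
    show ?thesis unfolding is_Aaut_def
    proof (intro conjI ballI b compose_extensional)
      fix g h :: "nat \<Rightarrow> 'a" assume gh: "g \<in> ?A" "h \<in> ?A"
      show "compose ?A H G (tadd g h) = tadd (compose ?A H G g) (compose ?A H G h)"
        using gh H G aut_in[OF G] by (simp add: compose_eq cl is_Aaut_def)
      show "compose ?A H G (Amul \<sigma> m d g h) = Amul \<sigma> m d (compose ?A H G g) (compose ?A H G h)"
        using gh H G aut_in[OF G] by (simp add: compose_eq cl is_Aaut_def)
    next
      fix c :: 'a and g :: "nat \<Rightarrow> 'a" assume "c \<in> fixed_center \<sigma>" "g \<in> ?A"
      then show "compose ?A H G (smul c g) = smul c (compose ?A H G g)"
        using H G aut_in[OF G] by (simp add: compose_eq cl is_Aaut_def)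
    qed
  qed
  have idaut: "is_Aaut \<sigma> m d (restrict id ?A)"
    unfolding is_Aaut_def
  proof (intro conjI ballI)
    show "bij_betw (restrict id ?A) ?A ?A" by (rule bij_betw_cong[THEN iffD1, rotated, OF bij_betw_id]) simp
  qed (auto simp: cl)
  have lone: "compose ?A (restrict id ?A) H = H" if H: "is_Aaut \<sigma> m d H" for H
  proof (rule ext)
    fix x show "compose ?A (restrict id ?A) H x = H x"
    proof (cases "x \<in> ?A")
      case True show ?thesis unfolding compose_eq[OF True] restrict_apply'[OF aut_in[OF H True]] id_apply by (rule refl)
    next
      case False
      have HH: "H \<in> extensional ?A" using H by (simp add: is_Aaut_def)
      show ?thesis unfolding compose_def restrict_apply' using extensional_arb[OF HH False] False by simp
    qed
  qed
  have linv: "\<exists>Y. is_Aaut \<sigma> m d Y \<and> compose ?A Y H = restrict id ?A" if H: "is_Aaut \<sigma> m d H" for H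
  proof -
    define Y where "Y = restrict (inv_into ?A H) ?A"
    have bH: "bij_betw H ?A ?A" using H by (simp add: is_Aaut_def)
    have YH: "Y (H x) = x" if "x \<in> ?A" for x
      using that aut_in[OF H that] bH by (simp add: Y_def bij_betw_def inv_into_f_f)
    have Yin: "Y g \<in> ?A" and HY: "H (Y g) = g" if "g \<in> ?A" for g
    proof -
      have "g \<in> H ` ?A" using that bH by (simp add: bij_betw_def)
      then show "Y g \<in> ?A" "H (Y g) = g" using that by (simp_all add: Y_def inv_into_into f_inv_into_f)
    qed
    have bY: "bij_betw Y ?A ?A"
      by (rule bij_betw_cong[THEN iffD1, rotated, OF bij_betw_inv_into[OF bH]]) (simp add: Y_def bH bij_betw_def)
    have Hops: "\<forall>g\<in>?A. \<forall>h\<in>?A. H (tadd g h) = tadd (H g) (H h)"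
       "\<forall>c\<in>fixed_center \<sigma>. \<forall>g\<in>?A. H (smul c g) = smul c (H g)"
       "\<forall>g\<in>?A. \<forall>h\<in>?A. H (Amul \<sigma> m d g h) = Amul \<sigma> m d (H g) (H h)" using H by (auto simp: is_Aaut_def)
    have "is_Aaut \<sigma> m d Y" unfolding is_Aaut_def
    proof (intro conjI ballI bY)
      show "Y \<in> extensional ?A" by (simp add: Y_def)
    next
      fix g h :: "nat \<Rightarrow> 'a" assume gh: "g \<in> ?A" "h \<in> ?A"
      have "Y (tadd g h) = Y (tadd (H (Y g)) (H (Y h)))" using gh HY by simp
      also have "\<dots> = Y (H (tadd (Y g) (Y h)))" using Hops(1) gh Yin by simp
      also have "\<dots> = tadd (Y g) (Y h)" by (rule YH[OF tadd_in_Acar[OF Yin[OF gh(1)] Yin[OF gh(2)]]])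
      finally show "Y (tadd g h) = tadd (Y g) (Y h)" .
      have "Y (Amul \<sigma> m d g h) = Y (Amul \<sigma> m d (H (Y g)) (H (Y h)))" using gh HY by simp
      also have "\<dots> = Y (H (Amul \<sigma> m d (Y g) (Y h)))" using Hops(3) gh Yin by simp
      also have "\<dots> = Amul \<sigma> m d (Y g) (Y h)" by (rule YH[OF Amul_in_Acar[OF \<sigma> m d Yin[OF gh(1)] Yin[OF gh(2)]]])
      finally show "Y (Amul \<sigma> m d g h) = Amul \<sigma> m d (Y g) (Y h)" .
    next
      fix c :: 'a and g :: "nat \<Rightarrow> 'a" assume cg: "c \<in> fixed_center \<sigma>" "g \<in> ?A"
      have "Y (smul c g) = Y (smul c (H (Y g)))" using cg HY by simp
      also have "\<dots> = Y (H (smul c (Y g)))" using Hops(2) cg Yin by simp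
      also have "\<dots> = smul c (Y g)" by (rule YH[OF smul_in_Acar[OF Yin[OF cg(2)]]])
      finally show "Y (smul c g) = smul c (Y g)" .
    qed
    moreover have "compose ?A Y H = restrict id ?A"
      by (rule ext) (simp add: compose_def YH)
    ultimately show ?thesis by blast
  qed
  show ?thesis
  proof (rule groupI)
    fix x y z assume "x \<in> carrier (AutA \<sigma> m d)" "y \<in> carrier (AutA \<sigma> m d)" "z \<in> carrier (AutA \<sigma> m d)"
    then have "z \<in> ?A \<rightarrow> ?A" "y \<in> ?A \<rightarrow> ?A" using aut_in by (auto simp: AutA_def)
    then show "x \<otimes>\<^bsub>AutA \<sigma> m d\<^esub> y \<otimes>\<^bsub>AutA \<sigma> m d\<^esub> z = x \<otimes>\<^bsub>AutA \<sigma> m d\<^esub> (y \<otimes>\<^bsub>AutA \<sigma> m d\<^esub> z)"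
      by (simp add: AutA_def compose_assoc)
  qed (auto simp: AutA_def comp idaut lone linv)
qed




lemma aut_ops:
  assumes "is_Aaut \<sigma> m d H"
  shows "\<And>g. g \<in> Acar m \<Longrightarrow> H g \<in> Acar m"
    "\<And>g h. g \<in> Acar m \<Longrightarrow> h \<in> Acar m \<Longrightarrow> H (tadd g h) = tadd (H g) (H h)"
    "\<And>g h. g \<in> Acar m \<Longrightarrow> h \<in> Acar m \<Longrightarrow> H (Amul \<sigma> m d g h) = Amul \<sigma> m d (H g) (H h)"
    "inj_on H (Acar m)" "H \<in> extensional (Acar m)"
  using assms unfolding is_Aaut_def bij_betw_def by auto

lemma const0: "const 0 = (\<lambda>n. 0)" by (simp add: const_def fun_eq_iff)

lemma aut_id_is_Hid:
  assumes \<sigma>: "ring_aut \<sigma>" and ro: "restr_order \<sigma> m" and d: "d \<noteq> 0"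
    and H: "is_Aaut \<sigma> m d H" and Hc: "\<And>a. H (const a) = const a"
    and m2: "1 < m"
  defines "k \<equiv> H (mon 1 1) 1"
  shows "k \<in> center" "k \<noteq> 0" "nrm \<sigma> k m = 1" "H = Hid \<sigma> m k"
proof -
  have m: "0 < m" using m2 by simp
  note ops = aut_ops[OF H]
  define T where "T = (mon 1 1 :: nat \<Rightarrow> 'a)"
  have T: "T \<in> Acar m" using m2 by (simp add: T_def mon_in_Acar)
  define p where "p = H T"
  have p: "p \<in> Acar m" using ops(1)[OF T] by (simp add: p_def)
  have cA: "mon 0 a \<in> Acar m" for a :: 'a using m by (rule mon_in_Acar)
  have Hc': "H (mon 0 a) = mon 0 a" for a using Hc[of a] by (simp add: const_mon)
  have rel: "p n * (\<sigma>^^n) a = \<sigma> a * p n" for n a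
  proof -
    have "Amul \<sigma> m d T (mon 0 a) = Amul \<sigma> m d (mon 0 (\<sigma> a)) T"
      unfolding Amul_const_right[OF \<sigma> m d T] Amul_const_left[OF \<sigma> m d T]
      by (auto simp: T_def mon_def fun_eq_iff funpow_zero[OF \<sigma>])
    then have "H (Amul \<sigma> m d T (mon 0 a)) = H (Amul \<sigma> m d (mon 0 (\<sigma> a)) T)" by simp
    then have "Amul \<sigma> m d p (mon 0 a) = Amul \<sigma> m d (mon 0 (\<sigma> a)) p"
      unfolding ops(3)[OF T cA] ops(3)[OF cA T] Hc' p_def .
    then show ?thesis
      unfolding Amul_const_right[OF \<sigma> m d p] Amul_const_left[OF \<sigma> m d p] by (simp add: fun_eq_iff)
  qed
  have roA: "\<And>j. 0 < j \<Longrightarrow> j < m \<Longrightarrow> \<exists>z\<in>center. (\<sigma>^^j) z \<noteq> z" using ro by (simp add: restr_order_def)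
  have pz: "p n = 0" if "n \<noteq> 1" for n
  proof (rule ccontr)
    assume nz: "p n \<noteq> 0"
    have n: "n < m" using nz p Acar_high[OF p] by (cases "n < m") auto
    have eq: "(\<sigma>^^n) z = \<sigma> z" if z: "z \<in> center" for z
    proof -
      have "p n * (\<sigma>^^n) z = \<sigma> z * p n" by (rule rel)
      also have "\<dots> = p n * \<sigma> z" using center_comm[OF ring_aut_center[OF \<sigma> z]] by simp
      finally show ?thesis using nz by simp
    qed
    show False
    proof (cases "n = 0")
      case True
      obtain z where "z \<in> center" "(\<sigma>^^1) z \<noteq> z" using roA[of 1] m2 by auto
      then show False using eq[of z] True by simp
    next
      case False
      then have j: "0 < n - 1" "n - 1 < m" using that n by auto
      obtain z where z: "z \<in> center" "(\<sigma>^^(n - 1)) z \<noteq> z" using roA[OF j] by auto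
      have "\<sigma> ((\<sigma>^^(n - 1)) z) = (\<sigma>^^n) z" using False by (metis Suc_pred' funpow.simps(2) gr0I o_apply)
      then have "\<sigma> ((\<sigma>^^(n - 1)) z) = \<sigma> z" using eq[OF z(1)] by simp
      then show False using z(2) ring_aut_basic(7)[OF \<sigma>] by (metis injD)
    qed
  qed
  have kdef: "k = p 1" by (simp add: k_def p_def T_def)
  have pk: "p = mon 1 k" using pz kdef by (auto simp: mon_def fun_eq_iff)
  show kc: "k \<in> center" unfolding center_def
  proof safe
    fix x
    obtain y where "x = \<sigma> y" using ring_aut_basic(8)[OF \<sigma>] by (metis surjD)
    then show "k * x = x * k" using rel[of 1 y] kdef by simp
  qed
  show kn: "k \<noteq> 0"
  proof
    assume "k = 0"
    then have "H T = H (const 0)" using pk Hc[of 0] by (simp add: p_def const0 mon_def fun_eq_iff)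
    then have "T = const 0" using ops(4) T cA[of 0] by (simp add: const_mon inj_on_def)
    then have "T 1 = const 0 1" by simp
    then show False by (simp add: T_def mon_def const_def)
  qed
  have Hmon1: "H (mon i 1) = mon i (nrm \<sigma> k i)" if "i < m" for i
    using that
  proof (induction i)
    case 0 then show ?case using Hc' by simp
  next
    case (Suc i)
    have e: "mon (Suc i) 1 = Amul \<sigma> m d (mon i 1) T"
      using Amul_mon[OF \<sigma> m d, of i 1 1 1] Suc.prems m2 funpow_one[OF \<sigma>] by (simp add: T_def)
    have "H (mon (Suc i) 1) = Amul \<sigma> m d (mon i (nrm \<sigma> k i)) (mon 1 k)"
    proof -
      have iA: "mon i 1 \<in> Acar m" using Suc.prems by (intro mon_in_Acar) simp
      show ?thesis unfolding e ops(3)[OF iA T] using Suc by (simp add: p_def[symmetric] pk)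
    qed
    also have "\<dots> = mon (Suc i) (nrm \<sigma> k (Suc i))"
      using Amul_mon[OF \<sigma> m d, of i 1 "nrm \<sigma> k i" k] Suc.prems m2 by (simp add: nrm_Suc)
    finally show ?case .
  qed
  have Hmon: "H (mon i a) = mon i (a * nrm \<sigma> k i)" if "i < m" for i a
  proof -
    have e: "mon i a = Amul \<sigma> m d (mon 0 a) (mon i 1)"
      using Amul_mon[OF \<sigma> m d, of 0 i a 1] that m funpow_one[OF \<sigma>] by simp
    show ?thesis unfolding e ops(3)[OF cA mon_in_Acar[OF that]] Hc' Hmon1[OF that]
      using Amul_mon[OF \<sigma> m d, of 0 i a "nrm \<sigma> k i"] that m by simp
  qed
  have Heq: "H g = Hid \<sigma> m k g" if g: "g \<in> Acar m" for g
  proof -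
    define gp where "gp j = (\<lambda>n. if n < j then g n else 0)" for j
    have gpA: "gp j \<in> Acar m" if "j \<le> m" for j
      using that by (simp add: gp_def Acar_def deg_lt_def)
    have "H (gp j) = (\<lambda>n. gp j n * nrm \<sigma> k n)" if "j \<le> m" for j
      using that
    proof (induction j)
      case 0
      have "gp 0 = const 0" by (simp add: gp_def const0)
      then show ?case using Hc[of 0] by (simp add: gp_def const0)
    next
      case (Suc j)
      have e: "gp (Suc j) = tadd (gp j) (mon j (g j))"
        by (auto simp: gp_def tadd_def mon_def fun_eq_iff)
      have j: "j < m" using Suc.prems by simp
      have jA: "gp j \<in> Acar m" using j by (intro gpA) simp
      have "H (gp (Suc j)) = tadd (H (gp j)) (H (mon j (g j)))"
        unfolding e by (rule ops(2)[OF jA mon_in_Acar[OF j]])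
      also have "\<dots> = tadd (\<lambda>n. gp j n * nrm \<sigma> k n) (mon j (g j * nrm \<sigma> k j))"
        using Suc j by (simp add: Hmon[OF j])
      also have "\<dots> = (\<lambda>n. gp (Suc j) n * nrm \<sigma> k n)"
        by (auto simp: gp_def tadd_def mon_def fun_eq_iff)
      finally show ?case .
    qed
    moreover have "gp m = g" using Acar_high[OF g] by (auto simp: gp_def fun_eq_iff)
    ultimately show ?thesis using Hid_eq[OF g] by auto
  qed
  show "H = Hid \<sigma> m k"
    by (rule extensionalityI[OF ops(5)]) (simp_all add: Hid_def Heq)
  show "nrm \<sigma> k m = 1"
  proof -
    have i: "m - 1 < m" using m by simp
    have e: "Amul \<sigma> m d (mon (m - 1) 1) T = const d"
      using Amul_mon[OF \<sigma> m d i, of 1 1 1] m2 funpow_one[OF \<sigma>] by (simp add: T_def const_mon)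
    have "const d = H (const d)" using Hc by simp
    also have "\<dots> = Amul \<sigma> m d (mon (m - 1) (nrm \<sigma> k (m - 1))) (mon 1 k)"
      unfolding e[symmetric] ops(3)[OF mon_in_Acar[OF i] T] Hmon1[OF i] by (simp add: p_def[symmetric] pk)
    also have "\<dots> = const (nrm \<sigma> k m * d)"
      using Amul_mon[OF \<sigma> m d i, of 1 "nrm \<sigma> k (m - 1)" k] m2 nrm_Suc[of \<sigma> k "m - 1"]
      by (simp add: const_mon)
    finally have "const d 0 = const (nrm \<sigma> k m * d) 0" by simp
    then have "d = nrm \<sigma> k m * d" by (simp add: const_def)
    then have "(nrm \<sigma> k m - 1) * d = 0" by (simp add: left_diff_distrib)
    then have "nrm \<sigma> k m - 1 = 0" using d by simp
    then show ?thesis by simp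
  qed
qed


lemma aut_id_m1:
  assumes \<sigma>: "ring_aut \<sigma>" and H: "is_Aaut \<sigma> 1 d H" and Hc: "\<And>a. H (const a) = const a"
  shows "H = Hid \<sigma> 1 1"
proof (rule extensionalityI[OF aut_ops(5)[OF H]])
  show "Hid \<sigma> 1 1 \<in> extensional (Acar 1)" by (simp add: Hid_def)
next
  fix g :: "nat \<Rightarrow> 'a" assume g: "g \<in> Acar 1"
  have "g = const (g 0)" using Acar_high[OF g] by (auto simp: const_def fun_eq_iff)
  then have "H g = g" using Hc by metis
  then show "H g = Hid \<sigma> 1 1 g" using Hid_one[OF \<sigma> g] by simp
qed

lemma Hid_compose: assumes "ring_aut \<sigma>" "k \<in> center" "k' \<in> center"
  shows "compose (Acar m) (Hid \<sigma> m k) (Hid \<sigma> m k') = Hid \<sigma> m (k * k')"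
proof (rule extensionalityI[OF compose_extensional])
  show "Hid \<sigma> m (k * k') \<in> extensional (Acar m)" by (simp add: Hid_def)
next
  fix g :: "nat \<Rightarrow> 'a" assume g: "g \<in> Acar m"
  show "compose (Acar m) (Hid \<sigma> m k) (Hid \<sigma> m k') g = Hid \<sigma> m (k * k') g"
    unfolding compose_eq[OF g] by (rule Hid_comp[OF assms g])
qed

lemma Hid_1_id: assumes "ring_aut \<sigma>" shows "restrict id (Acar m) = Hid \<sigma> m 1"
proof (rule extensionalityI[OF restrict_extensional])
  show "Hid \<sigma> m 1 \<in> extensional (Acar m)" by (simp add: Hid_def)
next
  fix g :: "nat \<Rightarrow> 'a" assume g: "g \<in> Acar m"
  show "restrict id (Acar m) g = Hid \<sigma> m 1 g" using Hid_one[OF assms g] g by simp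
qed

lemma Hid_T: assumes "1 < m" shows "Hid \<sigma> m k (mon 1 1) 1 = k"
proof -
  have TA: "mon 1 1 \<in> Acar m" using assms by (rule mon_in_Acar)
  show ?thesis unfolding Hid_eq[OF TA] by (simp add: mon_def nrm_Suc)
qed

lemma center_power: "w \<in> center \<Longrightarrow> w ^ n \<in> center"
  by (induction n) (simp_all add: center_one center_mult)




theorem corollary3p2:
  fixes \<sigma> :: "'a::division_ring \<Rightarrow> 'a" and m :: nat and d :: 'a
  assumes "fin_dim_over_center TYPE('a)"
    and "ring_aut \<sigma>"
    and "restr_order \<sigma> m"
    and "d \<notin> fixed_center \<sigma>"
  shows "AutA_id \<sigma> m d \<cong> normone_group \<sigma> m \<and>
         (\<forall>\<omega>. \<omega> \<in> fixed_center \<sigma> \<and> \<omega> ^ m = 1 \<and> (\<forall>j. 0 < j \<and> j < m \<longrightarrow> \<omega> ^ j \<noteq> 1) \<longrightarrow>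
           group (AutA \<sigma> m d) \<and> Hid \<sigma> m \<omega> \<in> carrier (AutA \<sigma> m d) \<and>
           subgroup (generate (AutA \<sigma> m d) {Hid \<sigma> m \<omega>}) (AutA \<sigma> m d) \<and>
           group.ord (AutA \<sigma> m d) (Hid \<sigma> m \<omega>) = m)"
proof -
  have \<sigma>: "ring_aut \<sigma>" and ro: "restr_order \<sigma> m" using assms by auto
  have m: "0 < m" using ro by (simp add: restr_order_def)
  have d: "d \<noteq> 0"
  proof
    assume "d = 0"
    then have "d \<in> fixed_center \<sigma>"
      using ring_aut_basic(1)[OF \<sigma>] by (simp add: fixed_center_def center_def)
    then show False using assms(4) by simp
  qed
  have NC: "carrier (normone_group \<sigma> m) = {k \<in> center. k \<noteq> 0 \<and> nrm \<sigma> k m = 1}"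
    by (simp add: normone_group_def nrm_def)
  have AC: "carrier (AutA_id \<sigma> m d) = {H. is_Aaut \<sigma> m d H \<and> (\<forall>a. H (const a) = const a)}"
    by (simp add: AutA_id_def)
  define phi where "phi H = (if m = 1 then 1 else H (mon 1 1) 1)" for H :: "(nat \<Rightarrow> 'a) \<Rightarrow> nat \<Rightarrow> 'a"
  have key: "phi H \<in> carrier (normone_group \<sigma> m) \<and> H = Hid \<sigma> m (phi H)"
    if "H \<in> carrier (AutA_id \<sigma> m d)" for H
  proof (cases "m = 1")
    case True
    have H: "is_Aaut \<sigma> 1 d H" "\<And>a. H (const a) = const a" using that True by (auto simp: AutA_id_def)
    have "H = Hid \<sigma> m 1" using aut_id_m1[OF \<sigma> H] True by simp
    then show ?thesis using True by (simp add: normone_group_def phi_def center_one)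
  next
    case False
    then have m2: "1 < m" using m by simp
    have H: "is_Aaut \<sigma> m d H" "\<And>a. H (const a) = const a" using that by (auto simp: AC)
    note r = aut_id_is_Hid[OF \<sigma> ro d H m2]
    have kk: "phi H = H (mon 1 1) 1" using False by (simp add: phi_def)
    have "phi H \<in> center" "phi H \<noteq> 0" "nrm \<sigma> (phi H) m = 1" "H = Hid \<sigma> m (phi H)"
      unfolding kk by (rule r(1), rule r(2), rule r(3), rule r(4))
    then show ?thesis unfolding NC by blast
  qed
  have HidC: "Hid \<sigma> m k \<in> carrier (AutA_id \<sigma> m d)" if "k \<in> carrier (normone_group \<sigma> m)" for k
  proof -
    have k: "k \<in> center" "k \<noteq> 0" "nrm \<sigma> k m = 1" using that by (auto simp: NC)
    show ?thesis unfolding AC using Hid_aut[OF \<sigma> m d k] by blast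
  qed
  have phiHid: "phi (Hid \<sigma> m k) = k" if "k \<in> carrier (normone_group \<sigma> m)" for k
  proof (cases "m = 1")
    case True
    then have "k = 1" using that by (simp add: normone_group_def)
    then show ?thesis using True by (simp add: phi_def)
  next
    case False
    then show ?thesis using m Hid_T[of m \<sigma> k] by (simp add: phi_def)
  qed
  have iso: "phi \<in> iso (AutA_id \<sigma> m d) (normone_group \<sigma> m)"
    unfolding iso_def hom_def
  proof (intro CollectI conjI ballI funcsetI)
    fix H assume "H \<in> carrier (AutA_id \<sigma> m d)"
    then show "phi H \<in> carrier (normone_group \<sigma> m)" using key by blast
  next
    fix H G assume HG: "H \<in> carrier (AutA_id \<sigma> m d)" "G \<in> carrier (AutA_id \<sigma> m d)"
    have kH: "phi H \<in> center" "H = Hid \<sigma> m (phi H)" and kG: "phi G \<in> center" "G = Hid \<sigma> m (phi G)"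
      using key[OF HG(1)] key[OF HG(2)] by (auto simp: NC)
    have "H \<otimes>\<^bsub>AutA_id \<sigma> m d\<^esub> G = Hid \<sigma> m (phi H * phi G)"
      using Hid_compose[OF \<sigma> kH(1) kG(1), of m] kH(2) kG(2) by (simp add: AutA_id_def)
    moreover have "phi H * phi G \<in> carrier (normone_group \<sigma> m)"
      using key[OF HG(1)] key[OF HG(2)] center_mult nrm_mult[OF \<sigma>] by (auto simp: NC)
    ultimately show "phi (H \<otimes>\<^bsub>AutA_id \<sigma> m d\<^esub> G) = phi H \<otimes>\<^bsub>normone_group \<sigma> m\<^esub> phi G"
      using phiHid by (simp add: normone_group_def)
  next
    show "bij_betw phi (carrier (AutA_id \<sigma> m d)) (carrier (normone_group \<sigma> m))"
    proof (rule bij_betw_imageI)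
      show "inj_on phi (carrier (AutA_id \<sigma> m d))"
      proof (rule inj_onI)
        fix H G assume HG: "H \<in> carrier (AutA_id \<sigma> m d)" "G \<in> carrier (AutA_id \<sigma> m d)" "phi H = phi G"
        have "H = Hid \<sigma> m (phi H)" using key[OF HG(1)] by blast
        also have "\<dots> = Hid \<sigma> m (phi G)" using HG(3) by simp
        also have "\<dots> = G" using key[OF HG(2)] by simp
        finally show "H = G" .
      qed
      show "phi ` carrier (AutA_id \<sigma> m d) = carrier (normone_group \<sigma> m)"
      proof
        show "phi ` carrier (AutA_id \<sigma> m d) \<subseteq> carrier (normone_group \<sigma> m)" using key by blast
        show "carrier (normone_group \<sigma> m) \<subseteq> phi ` carrier (AutA_id \<sigma> m d)"
        proof
          fix k assume k: "k \<in> carrier (normone_group \<sigma> m)"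
          show "k \<in> phi ` carrier (AutA_id \<sigma> m d)"
            by (rule image_eqI[where f = phi and x = "Hid \<sigma> m k", OF phiHid[OF k, symmetric] HidC[OF k]])
        qed
      qed
    qed
  qed
  have partii: "group (AutA \<sigma> m d) \<and> Hid \<sigma> m w \<in> carrier (AutA \<sigma> m d) \<and>
           subgroup (generate (AutA \<sigma> m d) {Hid \<sigma> m w}) (AutA \<sigma> m d) \<and>
           group.ord (AutA \<sigma> m d) (Hid \<sigma> m w) = m"
    if w: "w \<in> fixed_center \<sigma>" "w ^ m = 1" "\<forall>j. 0 < j \<and> j < m \<longrightarrow> w ^ j \<noteq> 1" for w
  proof -
    interpret G: group "AutA \<sigma> m d" by (rule AutA_group[OF \<sigma> m d])
    have wc: "w \<in> center" "\<sigma> w = w" using w(1) by (auto simp: fixed_center_def)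
    have wn: "w \<noteq> 0" using w(2) m by (cases m) auto
    have wpc: "w ^ n \<in> center" for n using center_power[OF wc(1)] .
    have wpn: "nrm \<sigma> (w ^ n) m = 1" for n
    proof -
      have "\<sigma> (w ^ n) = w ^ n" using wc(2) by (induction n) (simp_all add: ring_aut_basic(2,6)[OF \<sigma>])
      then have "nrm \<sigma> (w ^ n) m = (w ^ n) ^ m" by (rule nrm_fixed)
      also have "\<dots> = (w ^ m) ^ n" by (simp add: power_mult[symmetric] mult.commute)
      finally show ?thesis using w(2) by simp
    qed
    have wpnz: "w ^ n \<noteq> 0" for n using wn by simp
    have inC: "Hid \<sigma> m (w ^ n) \<in> carrier (AutA \<sigma> m d)" for n
      using Hid_aut(1)[OF \<sigma> m d wpc wpnz wpn] by (simp add: AutA_def)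
    have inC1: "Hid \<sigma> m w \<in> carrier (AutA \<sigma> m d)" using inC[of 1] by simp
    have pw: "Hid \<sigma> m w [^]\<^bsub>AutA \<sigma> m d\<^esub> n = Hid \<sigma> m (w ^ n)" for n :: nat
    proof (induction n)
      case 0 then show ?case using Hid_1_id[OF \<sigma>, of m] by (simp add: AutA_def)
    next
      case (Suc n)
      have "Hid \<sigma> m w [^]\<^bsub>AutA \<sigma> m d\<^esub> Suc n = Hid \<sigma> m (w ^ n) \<otimes>\<^bsub>AutA \<sigma> m d\<^esub> Hid \<sigma> m w"
        using Suc by (simp add: G.nat_pow_Suc)
      also have "\<dots> = Hid \<sigma> m (w ^ n * w)"
        using Hid_compose[OF \<sigma> wpc[of n] wc(1), of m] by (simp add: AutA_def)
      also have "w ^ n * w = w ^ Suc n" by (simp add: power_commutes)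
      finally show ?case .
    qed
    have ordm: "G.ord (Hid \<sigma> m w) dvd m"
      using G.pow_eq_id[OF inC1, of m] pw[of m] w(2) Hid_1_id[OF \<sigma>, of m] by (simp add: AutA_def)
    define q where "q = G.ord (Hid \<sigma> m w)"
    have opos: "0 < q" using ordm m q_def by (cases q) auto
    have "\<not> q < m"
    proof
      assume lt: "q < m"
      have "Hid \<sigma> m w [^]\<^bsub>AutA \<sigma> m d\<^esub> q = \<one>\<^bsub>AutA \<sigma> m d\<^esub>"
        using G.pow_eq_id[OF inC1, of q] q_def by simp
      then have e: "Hid \<sigma> m (w ^ q) = restrict id (Acar m)" using pw[of q] by (simp add: AutA_def)
      have m2: "1 < m" using lt opos by simp
      have "Hid \<sigma> m (w ^ q) (mon 1 1) 1 = restrict id (Acar m) (mon 1 1) 1" using e by simp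
      moreover have "Hid \<sigma> m (w ^ q) (mon 1 1) 1 = w ^ q" by (rule Hid_T[OF m2])
      moreover have "restrict id (Acar m) (mon 1 1) 1 = (1::'a)"
      proof -
        have TA: "mon 1 (1::'a) \<in> Acar m" using m2 by (rule mon_in_Acar)
        have "restrict id (Acar m) (mon 1 1) = mon 1 (1::'a)" by (simp only: restrict_apply'[OF TA] id_apply)
        then show ?thesis by (simp add: mon_def)
      qed
      ultimately have "w ^ q = 1" by simp
      then show False using w(3) opos lt by blast
    qed
    then have "q = m" using ordm q_def m by (simp add: dvd_imp_le le_antisym not_less)
    then show ?thesis using G.is_group inC1 G.generate_is_subgroup[of "{Hid \<sigma> m w}"] q_def by simp
  qed
  show ?thesis using is_isoI[OF iso] partii by blast
qed


end
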